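(* There is no function $V(t,x,m,P)$ which, for each $(t,P)$, is a polynomial of finite degree in $(x,m)$ (with coefficients depending smoothly on $(t,P)$) and satisfies $V_{xx}>0$, such that $V$ solves the reduced HJB equation $$0=V_t+\frac{P^2}{2}V_{mm}-P^2V_P-\frac{(mV_x+PV_{xm})^2}{2V_{xx}}-\frac{\tau}{2}\log\!\Big(\frac{2\pi\tau}{\sigma^2V_{xx}}\Big),$$ where $\pi=3.14159\ldots$.
   Context: Constants $\sigma>0$, $\tau>0$; $P\ge 0$ is the posterior variance variable and $m$ the posterior mean variable of an unknown Sharpe ratio, $x$ is discounted wealth. *)

theory Defs
  imports "HOL-Analysis.Analysis"
begin

text \<open>Infinitely (Frechet-)differentiable real functions of two real variables on a set S
  (meant for open S): f is differentiable at every point of S with partial derivatives g, h,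
  and g, h are again smooth on S (coinductively, i.e. derivatives of all orders exist).\<close>
coinductive smooth2_on :: "(real \<times> real) set \<Rightarrow> (real \<times> real \<Rightarrow> real) \<Rightarrow> bool" where
  "(\<And>p. p \<in> S \<Longrightarrow> (f has_derivative (\<lambda>(u, v). g p * u + h p * v)) (at p))
   \<Longrightarrow> smooth2_on S g \<Longrightarrow> smooth2_on S h \<Longrightarrow> smooth2_on S f"

end

theory Submission
  imports Defs "HOL-Computational_Algebra.Polynomial"
begin


lemma poly_ratio_not_0:
  fixes a b :: "real poly"
  assumes "degree b \<le> degree a" "a \<noteq> 0" "b \<noteq> 0"
    and lim: "((\<lambda>s. poly a s / poly b s) \<longlongrightarrow> 0) at_top"
  shows False
proof -
  define n where "n = degree a - degree b"
  have la: "((\<lambda>s. poly a s / s ^ degree a) \<longlongrightarrow> lead_coeff a) at_top"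
    using poly_divide_tendsto_aux[of a] tendsto_mono[OF at_top_le_at_infinity] by blast
  have lb: "((\<lambda>s. poly b s / s ^ degree b) \<longlongrightarrow> lead_coeff b) at_top"
    using poly_divide_tendsto_aux[of b] tendsto_mono[OF at_top_le_at_infinity] by blast
  have l1: "((\<lambda>s. (poly a s / s ^ degree a) / (poly b s / s ^ degree b)) \<longlongrightarrow> lead_coeff a / lead_coeff b) at_top"
    using assms by (intro tendsto_divide la lb) auto
  obtain l where ln: "((\<lambda>s::real. 1 / s ^ n) \<longlongrightarrow> l) at_top"
  proof (cases "n = 0")
    case True then show ?thesis using that[of 1] by simp
  next
    case False
    have "((\<lambda>s::real. inverse (s ^ n)) \<longlongrightarrow> 0) at_top"
      by (rule tendsto_inverse_0_at_top) (use False in \<open>simp add: filterlim_pow_at_top filterlim_ident\<close>)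
    then show ?thesis using that[of 0] by (simp add: inverse_eq_divide)
  qed
  have l2: "((\<lambda>s. (poly a s / poly b s) * (1 / s ^ n)) \<longlongrightarrow> 0 * l) at_top"
    by (intro tendsto_mult lim ln)
  have ev: "eventually (\<lambda>s. (poly a s / poly b s) * (1 / s ^ n) = (poly a s / s ^ degree a) / (poly b s / s ^ degree b)) at_top"
  proof (rule eventually_at_top_linorderI[of 1])
    fix s :: real assume "1 \<le> s"
    then have "s \<noteq> 0" by auto
    have "s ^ degree a = s ^ degree b * s ^ n" using assms(1) unfolding n_def
      by (simp add: power_add[symmetric])
    then show "(poly a s / poly b s) * (1 / s ^ n) = (poly a s / s ^ degree a) / (poly b s / s ^ degree b)"
      using \<open>s \<noteq> 0\<close> by (simp add: field_simps)
  qed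
  have "((\<lambda>s. (poly a s / s ^ degree a) / (poly b s / s ^ degree b)) \<longlongrightarrow> 0) at_top"
    using tendsto_cong[OF ev] l2 by simp
  from tendsto_unique[OF _ l1 this] have "lead_coeff a / lead_coeff b = 0" by simp
  then show False using assms by simp
qed

lemma poly_log_const:
  fixes p q :: "real poly"
  assumes pos: "\<And>s. poly p s > 0" and eq: "\<And>s. poly p s * ln (poly p s) = poly q s"
  shows "degree p = 0"
proof (rule ccontr)
  assume dp: "degree p \<noteq> 0"
  have "filterlim (poly p) at_infinity at_top"
    using filterlim_poly_at_infinity[of p] dp filterlim_mono[OF _ order_refl at_top_le_at_infinity] by auto
  from filterlim_at_infinity_imp_norm_at_top[OF this]
  have lim1: "filterlim (\<lambda>s. poly p s) at_top at_top"
    using pos by (simp add: abs_of_pos)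
  have lim2: "filterlim (\<lambda>s. ln (poly p s)) at_top at_top"
    by (rule filterlim_compose[OF ln_at_top lim1])
  have p0: "p \<noteq> 0" using dp by auto
  have q0: "q \<noteq> 0"
  proof
    assume "q = 0"
    then have "\<And>s. ln (poly p s) = 0" using eq pos by (metis mult_eq_0_iff poly_0 order_less_irrefl)
    moreover have "eventually (\<lambda>s. 1 \<le> ln (poly p s)) at_top"
      using lim2 by (simp add: filterlim_at_top)
    ultimately show False by simp
  qed
  have qp: "\<And>s. poly q s / poly p s = ln (poly p s)"
    using eq pos by (metis nonzero_mult_div_cancel_left order_less_irrefl)
  show False
  proof (cases "degree q \<le> degree p")
    case True
    have "((\<lambda>s. inverse (ln (poly p s))) \<longlongrightarrow> 0) at_top"
      by (rule tendsto_inverse_0_at_top[OF lim2])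
    moreover have "\<And>s. poly p s / poly q s = inverse (ln (poly p s))"
      using qp by (metis inverse_divide)
    ultimately show False using poly_ratio_not_0[OF True p0 q0] by simp
  next
    case False
    define b where "b = p * [:0, 1:]"
    have b0: "b \<noteq> 0" using p0 by (simp add: b_def)
    have db: "degree b = degree p + 1" using p0 by (simp add: b_def degree_mult_eq)
    have "((\<lambda>s. ln (poly p s) / s) \<longlongrightarrow> 0) at_top"
    proof -
      have la: "((\<lambda>s. poly p s / s ^ degree p) \<longlongrightarrow> lead_coeff p) at_top"
        using poly_divide_tendsto_aux[of p] tendsto_mono[OF at_top_le_at_infinity] by blast
      define C where "C = \<bar>lead_coeff p\<bar> + 1"
      have C: "C > 0" by (simp add: C_def)
      have ev1: "eventually (\<lambda>s. poly p s / s ^ degree p < C) at_top"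
        using order_tendstoD(2)[OF la] by (simp add: C_def)
      have ev2: "eventually (\<lambda>s. 0 \<le> ln (poly p s)) at_top"
        using lim2 by (simp add: filterlim_at_top)
      have ev: "eventually (\<lambda>s. 0 \<le> ln (poly p s) / s \<and> ln (poly p s) / s \<le> (ln C + real (degree p) * ln s) / s) at_top"
        using ev1 ev2 eventually_gt_at_top[of 0]
      proof eventually_elim
        case (elim s)
        have "poly p s < C * s ^ degree p" using elim by (simp add: field_simps)
        then have "ln (poly p s) \<le> ln (C * s ^ degree p)" using pos[of s] by simp
        also have "\<dots> = ln C + real (degree p) * ln s" using C elim by (simp add: ln_mult ln_realpow)
        finally show ?case using elim by (simp add: divide_right_mono)
      qed
      have "((\<lambda>s. (ln C + real (degree p) * ln s) / s) \<longlongrightarrow> 0) at_top"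
      proof -
        have "((\<lambda>s. ln C / s + real (degree p) * (ln s / s)) \<longlongrightarrow> 0 + real (degree p) * 0) at_top"
          by (intro tendsto_intros ln_x_over_x_tendsto_0 tendsto_divide_0[OF tendsto_const] filterlim_at_top_imp_at_infinity filterlim_ident)
        then show ?thesis by (simp add: add_divide_distrib)
      qed
      moreover have "eventually (\<lambda>s. 0 \<le> ln (poly p s) / s) at_top" using ev by (rule eventually_mono) auto
      moreover have "eventually (\<lambda>s. ln (poly p s) / s \<le> (ln C + real (degree p) * ln s) / s) at_top" using ev by (rule eventually_mono) auto
      ultimately show ?thesis
        using tendsto_sandwich[of "\<lambda>_. 0" "\<lambda>s. ln (poly p s) / s" at_top "\<lambda>s. (ln C + real (degree p) * ln s) / s" 0] by auto
    qed
    moreover have "\<And>s. poly q s / poly b s = ln (poly p s) / s"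
      using qp by (simp add: b_def) (metis divide_divide_eq_left mult.commute)
    ultimately show False using poly_ratio_not_0[of b q] False db b0 q0 by simp
  qed
qed



definition ispoly :: "(real \<Rightarrow> real) \<Rightarrow> bool" where
  "ispoly f \<longleftrightarrow> (\<exists>p. \<forall>x. f x = poly p x)"

lemma ispoly_const: "ispoly (\<lambda>x. c)"
  unfolding ispoly_def by (rule exI[of _ "[:c:]"]) simp

lemma ispoly_id: "ispoly (\<lambda>x. x)"
  unfolding ispoly_def by (rule exI[of _ "[:0, 1:]"]) simp

lemma ispoly_add: "ispoly f \<Longrightarrow> ispoly g \<Longrightarrow> ispoly (\<lambda>x. f x + g x)"
  unfolding ispoly_def by (metis poly_add)

lemma ispoly_diff: "ispoly f \<Longrightarrow> ispoly g \<Longrightarrow> ispoly (\<lambda>x. f x - g x)"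
  unfolding ispoly_def by (metis poly_diff)

lemma ispoly_mult: "ispoly f \<Longrightarrow> ispoly g \<Longrightarrow> ispoly (\<lambda>x. f x * g x)"
  unfolding ispoly_def by (metis poly_mult)

lemma ispoly_divc: "ispoly f \<Longrightarrow> ispoly (\<lambda>x. f x / c)"
  unfolding divide_inverse by (intro ispoly_mult ispoly_const)

lemma ispoly_power: "ispoly f \<Longrightarrow> ispoly (\<lambda>x. f x ^ n)"
  by (induction n) (auto intro: ispoly_mult ispoly_const)

lemma ispoly_sum: "(\<And>i. i \<in> A \<Longrightarrow> ispoly (f i)) \<Longrightarrow> ispoly (\<lambda>x. \<Sum>i\<in>A. f i x)"
proof (induction A rule: infinite_finite_induct)
  case (infinite A) then show ?case by (simp add: ispoly_const)
next
  case empty then show ?case by (simp add: ispoly_const)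
next
  case (insert a A) then show ?case by (simp add: ispoly_add)
qed


lemma ispoly_const_if_log:
  assumes "ispoly f" "ispoly g" "\<And>s. f s > 0" "\<And>s. f s * ln (f s) = g s"
  shows "f s = f 0"
proof -
  obtain p where p: "\<And>x. f x = poly p x" using assms(1) unfolding ispoly_def by blast
  obtain q where q: "\<And>x. g x = poly q x" using assms(2) unfolding ispoly_def by blast
  have "degree p = 0"
    by (rule poly_log_const[of p q]) (use assms p q in auto)
  then obtain c where "p = [:c:]" by (metis degree_eq_zeroE)
  then show ?thesis using p by simp
qed

lemma line_const:
  fixes \<tau> K :: real
  assumes "ispoly A" "ispoly R" "ispoly B" "\<And>s. A s > 0" "\<tau> > 0" "K > 0"
    and eq: "\<And>s. 0 = R s - (B s)\<^sup>2 / (2 * A s) - \<tau> / 2 * ln (K / A s)"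
  shows "A s = A 0"
proof (rule ispoly_const_if_log[of A "\<lambda>s. A s * ln K - (2 / \<tau>) * (A s * R s - (B s)\<^sup>2 / 2)"])
  show "ispoly (\<lambda>s. A s * ln K - 2 / \<tau> * (A s * R s - (B s)\<^sup>2 / 2))"
    using assms(1-3) unfolding divide_inverse by (intro ispoly_diff ispoly_mult ispoly_const ispoly_power) auto
  fix s
  have As: "A s > 0" by fact
  have "ln (K / A s) = ln K - ln (A s)" using As assms(6) by (simp add: ln_div)
  with eq[of s] have "\<tau> / 2 * (ln K - ln (A s)) = R s - (B s)\<^sup>2 / (2 * A s)" by simp
  then have "A s * (\<tau> / 2 * (ln K - ln (A s))) = A s * R s - (B s)\<^sup>2 / 2"
    using As by (simp add: field_simps)
  then show "A s * ln (A s) = A s * ln K - 2 / \<tau> * (A s * R s - (B s)\<^sup>2 / 2)"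
    using assms(5) by (simp add: field_simps)
qed (use assms in auto)

definition S :: "nat \<Rightarrow> (nat \<Rightarrow> nat \<Rightarrow> real) \<Rightarrow> (nat \<Rightarrow> real \<Rightarrow> real) \<Rightarrow> (nat \<Rightarrow> real \<Rightarrow> real) \<Rightarrow> real \<Rightarrow> real \<Rightarrow> real" where
  "S N a f g x m = (\<Sum>i\<le>N. \<Sum>j\<le>N. a i j * f i x * g j m)"

definition pw :: "nat \<Rightarrow> real \<Rightarrow> real" where "pw i x = x ^ i"
definition dp :: "nat \<Rightarrow> real \<Rightarrow> real" where "dp i x = of_nat i * x ^ (i - 1)"
definition ddp :: "nat \<Rightarrow> real \<Rightarrow> real" where "ddp i x = of_nat i * (of_nat (i - 1) * x ^ (i - 2))"

lemma d_pw: "DERIV (pw i) x :> dp i x"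
  unfolding pw_def dp_def by (auto intro!: derivative_eq_intros)

lemma d_dp: "DERIV (dp i) x :> ddp i x"
  unfolding dp_def ddp_def by (auto intro!: derivative_eq_intros simp: diff_diff_add numeral_2_eq_2)

lemma ispoly_pw: "ispoly (pw i)" unfolding pw_def by (intro ispoly_power ispoly_id)
lemma ispoly_dp: "ispoly (dp i)" unfolding dp_def by (intro ispoly_mult ispoly_power ispoly_id ispoly_const)
lemma ispoly_ddp: "ispoly (ddp i)" unfolding ddp_def by (intro ispoly_mult ispoly_power ispoly_id ispoly_const)

lemma S_dx: "(\<And>i. DERIV (f i) x :> f' i x) \<Longrightarrow> DERIV (\<lambda>z. S N a f g z m) x :> S N a f' g x m"
  unfolding S_def by (auto intro!: derivative_eq_intros simp: mult_ac)

lemma S_dm: "(\<And>j. DERIV (g j) m :> g' j m) \<Longrightarrow> DERIV (\<lambda>k. S N a f g x k) m :> S N a f g' x m"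
  unfolding S_def by (auto intro!: derivative_eq_intros simp: mult_ac)

lemma S_dc: "(\<And>i j. DERIV (\<lambda>s. a s i j) t :> a' i j) \<Longrightarrow> DERIV (\<lambda>s. S N (a s) f g x m) t :> S N a' f g x m"
  unfolding S_def by (auto intro!: derivative_eq_intros simp: mult_ac)

lemma ispoly_Sx: "(\<And>i. ispoly (f i)) \<Longrightarrow> ispoly (\<lambda>x. S N a f g x m)"
  unfolding S_def by (intro ispoly_sum ispoly_mult ispoly_const) auto

lemma ispoly_Sm: "(\<And>j. ispoly (g j)) \<Longrightarrow> ispoly (\<lambda>m. S N a f g x m)"
  unfolding S_def by (intro ispoly_sum ispoly_mult ispoly_const) auto

lemma deriv_Sx_pw: "deriv (\<lambda>z. S N a pw g z m) x = S N a dp g x m"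
  by (rule DERIV_imp_deriv[OF S_dx[OF d_pw]])
lemma deriv_Sx_dp: "deriv (\<lambda>z. S N a dp g z m) x = S N a ddp g x m"
  by (rule DERIV_imp_deriv[OF S_dx[OF d_dp]])
lemma deriv_Sm_pw: "deriv (\<lambda>k. S N a f pw x k) m = S N a f dp x m"
  by (rule DERIV_imp_deriv[OF S_dm[OF d_pw]])
lemma deriv_Sm_dp: "deriv (\<lambda>k. S N a f dp x k) m = S N a f ddp x m"
  by (rule DERIV_imp_deriv[OF S_dm[OF d_dp]])

lemma partial_t:
  assumes "((\<lambda>(t, P). f t P) has_derivative (\<lambda>(u, v). g * u + h * v)) (at (t0, P0))"
  shows "((\<lambda>s. f s P0) has_real_derivative g) (at t0)"
proof -
  have "((\<lambda>s. (s, P0)) has_derivative (\<lambda>u. (u, 0))) (at t0)"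
    by (auto intro!: derivative_eq_intros)
  from diff_chain_at[OF this assms[unfolded fst_conv]]
  have "((\<lambda>s. f s P0) has_derivative (\<lambda>u. g * u)) (at t0)"
    by (simp add: o_def)
  then show ?thesis unfolding has_field_derivative_def by (metis (no_types) ext)
qed

lemma partial_P:
  assumes "((\<lambda>(t, P). f t P) has_derivative (\<lambda>(u, v). g * u + h * v)) (at (t0, P0))"
  shows "((\<lambda>q. f t0 q) has_real_derivative h) (at P0)"
proof -
  have "((\<lambda>q. (t0, q)) has_derivative (\<lambda>u. (0, u))) (at P0)"
    by (auto intro!: derivative_eq_intros)
  from diff_chain_at[OF this assms]
  have "((\<lambda>q. f t0 q) has_derivative (\<lambda>u. h * u)) (at P0)"
    by (simp add: o_def)
  then show ?thesis unfolding has_field_derivative_def by (metis (no_types) ext)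
qed

lemma alg:
  fixes a m u w L q r g1 g2 g3 h1 h2 h3 v1 v2 v3 :: real
  assumes a: "a > 0"
    and e1: "0 = g1 + q * v1 - r * h1 - (m * (u + a * 1) + w)\<^sup>2 / (2 * a) - L"
    and e2: "0 = g2 + q * v2 - r * h2 - (m * (u + a * (-1)) + w)\<^sup>2 / (2 * a) - L"
    and e3: "0 = g3 + q * v3 - r * h3 - (m * (u + a * 0) + w)\<^sup>2 / (2 * a) - L"
    and v: "v1 + v2 - 2 * v3 = 0"
  shows "(g1 + g2 - 2 * g3) - r * (h1 + h2 - 2 * h3) = m\<^sup>2 * a"
proof -
  have "(m * (u + a * 1) + w)\<^sup>2 / (2 * a) + (m * (u + a * (-1)) + w)\<^sup>2 / (2 * a) - 2 * ((m * (u + a * 0) + w)\<^sup>2 / (2 * a))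
        = ((m * (u + a * 1) + w)\<^sup>2 + (m * (u + a * (-1)) + w)\<^sup>2 - 2 * (m * (u + a * 0) + w)\<^sup>2) / (2 * a)"
    by (simp add: add_divide_distrib diff_divide_distrib)
  also have "\<dots> = (2 * m\<^sup>2 * a\<^sup>2) / (2 * a)"
    by (simp add: power2_eq_square algebra_simps)
  also have "\<dots> = m\<^sup>2 * a" using a by (simp add: power2_eq_square)
  finally have key: "(m * (u + a * 1) + w)\<^sup>2 / (2 * a) + (m * (u + a * (-1)) + w)\<^sup>2 / (2 * a) - 2 * ((m * (u + a * 0) + w)\<^sup>2 / (2 * a)) = m\<^sup>2 * a" .
  have "(g1 + g2 - 2 * g3) - r * (h1 + h2 - 2 * h3) + q * (v1 + v2 - 2 * v3) = m\<^sup>2 * a"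
    using e1 e2 e3 key by (simp add: algebra_simps)
  then show ?thesis using v by simp
qed

theorem proposition4p1:
  fixes \<sigma> \<tau> T :: real
  assumes "\<sigma> > 0" and "\<tau> > 0" and "T > 0"
  shows "\<not> (\<exists>V :: real \<Rightarrow> real \<Rightarrow> real \<Rightarrow> real \<Rightarrow> real.
     (\<exists>(N::nat) (c :: nat \<Rightarrow> nat \<Rightarrow> real \<Rightarrow> real \<Rightarrow> real).
        (\<forall>i j. smooth2_on ({0<..<T} \<times> {0<..}) (\<lambda>(t, P). c i j t P)) \<and>
        (\<forall>t x m P. 0 < t \<and> t < T \<and> 0 < P \<longrightarrow>
            V t x m P = (\<Sum>i\<le>N. \<Sum>j\<le>N. c i j t P * x ^ i * m ^ j))) \<and>
     (\<forall>t x m P. 0 < t \<and> t < T \<and> 0 < P \<longrightarrow>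
        (let Vxx = deriv (\<lambda>y. deriv (\<lambda>z. V t z m P) y) x in
         Vxx > 0 \<and>
         0 = deriv (\<lambda>s. V s x m P) t
             + P\<^sup>2 / 2 * deriv (\<lambda>n. deriv (\<lambda>k. V t x k P) n) m
             - P\<^sup>2 * deriv (\<lambda>q. V t x m q) P
             - (m * deriv (\<lambda>z. V t z m P) x
                + P * deriv (\<lambda>k. deriv (\<lambda>z. V t z k P) x) m)\<^sup>2 / (2 * Vxx)
             - \<tau> / 2 * ln (2 * pi * \<tau> / (\<sigma>\<^sup>2 * Vxx)))))"
proof
  assume "\<exists>V :: real \<Rightarrow> real \<Rightarrow> real \<Rightarrow> real \<Rightarrow> real.
     (\<exists>(N::nat) (c :: nat \<Rightarrow> nat \<Rightarrow> real \<Rightarrow> real \<Rightarrow> real).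
        (\<forall>i j. smooth2_on ({0<..<T} \<times> {0<..}) (\<lambda>(t, P). c i j t P)) \<and>
        (\<forall>t x m P. 0 < t \<and> t < T \<and> 0 < P \<longrightarrow>
            V t x m P = (\<Sum>i\<le>N. \<Sum>j\<le>N. c i j t P * x ^ i * m ^ j))) \<and>
     (\<forall>t x m P. 0 < t \<and> t < T \<and> 0 < P \<longrightarrow>
        (let Vxx = deriv (\<lambda>y. deriv (\<lambda>z. V t z m P) y) x in
         Vxx > 0 \<and>
         0 = deriv (\<lambda>s. V s x m P) t
             + P\<^sup>2 / 2 * deriv (\<lambda>n. deriv (\<lambda>k. V t x k P) n) m
             - P\<^sup>2 * deriv (\<lambda>q. V t x m q) P
             - (m * deriv (\<lambda>z. V t z m P) x
                + P * deriv (\<lambda>k. deriv (\<lambda>z. V t z k P) x) m)\<^sup>2 / (2 * Vxx)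
             - \<tau> / 2 * ln (2 * pi * \<tau> / (\<sigma>\<^sup>2 * Vxx))))"
  then obtain V N c where
    sm: "\<forall>i j. smooth2_on ({0<..<T} \<times> {0<..}) (\<lambda>(t, P). c i j t P)" and
    rep0: "\<forall>t x m P. 0 < t \<and> t < T \<and> 0 < P \<longrightarrow>
            V t x m P = (\<Sum>i\<le>N. \<Sum>j\<le>N. c i j t P * x ^ i * m ^ j)" and
    eq0: "\<forall>t x m P. 0 < t \<and> t < T \<and> 0 < P \<longrightarrow>
        (let Vxx = deriv (\<lambda>y. deriv (\<lambda>z. V t z m P) y) x in
         Vxx > 0 \<and>
         0 = deriv (\<lambda>s. V s x m P) t
             + P\<^sup>2 / 2 * deriv (\<lambda>n. deriv (\<lambda>k. V t x k P) n) m
             - P\<^sup>2 * deriv (\<lambda>q. V t x m q) P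
             - (m * deriv (\<lambda>z. V t z m P) x
                + P * deriv (\<lambda>k. deriv (\<lambda>z. V t z k P) x) m)\<^sup>2 / (2 * Vxx)
             - \<tau> / 2 * ln (2 * pi * \<tau> / (\<sigma>\<^sup>2 * Vxx)))"
    by blast
  define D where "D = {0<..<T} \<times> ({0<..} :: real set)"
  define C where "C t P = (\<lambda>i j. c i j t P)" for t P
  define K where "K = 2 * pi * \<tau> / \<sigma>\<^sup>2"
  have K: "K > 0" using assms by (simp add: K_def)
  have rep: "V t x m P = S N (C t P) pw pw x m" if "0 < t" "t < T" "0 < P" for t x m P
    using rep0 that by (simp add: S_def C_def pw_def)
  have "\<forall>i j. \<exists>g h. \<forall>p\<in>D. ((\<lambda>(t, P). c i j t P) has_derivative (\<lambda>(u, v). g p * u + h p * v)) (at p)"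
  proof (intro allI)
    fix i j
    from sm have "smooth2_on D (\<lambda>(t, P). c i j t P)" by (simp add: D_def)
    then show "\<exists>g h. \<forall>p\<in>D. ((\<lambda>(t, P). c i j t P) has_derivative (\<lambda>(u, v). g p * u + h p * v)) (at p)"
      by (cases rule: smooth2_on.cases) blast
  qed
  then obtain G H where GH: "\<And>i j p. p \<in> D \<Longrightarrow> ((\<lambda>(t, P). c i j t P) has_derivative (\<lambda>(u, v). G i j p * u + H i j p * v)) (at p)"
    by metis
  define Gt where "Gt t P = (\<lambda>i j. G i j (t, P))" for t P
  define Hp where "Hp t P = (\<lambda>i j. H i j (t, P))" for t P
  have dct: "DERIV (\<lambda>s. C s P i j) t :> Gt t P i j" if "0 < t" "t < T" "0 < P" for t P i j
    unfolding C_def Gt_def using partial_t[OF GH[of "(t, P)" i j]] that by (simp add: D_def)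
  have dcP: "DERIV (\<lambda>q. C t q i j) P :> Hp t P i j" if "0 < t" "t < T" "0 < P" for t P i j
    unfolding C_def Hp_def using partial_P[OF GH[of "(t, P)" i j]] that by (simp add: D_def)
  have dSt: "DERIV (\<lambda>s. S N (C s P) f g x m) t :> S N (Gt t P) f g x m" if "0 < t" "t < T" "0 < P" for t P f g x m
    by (rule S_dc) (rule dct[OF that])
  have dSP: "DERIV (\<lambda>q. S N (C t q) f g x m) P :> S N (Hp t P) f g x m" if "0 < t" "t < T" "0 < P" for t P f g x m
    by (rule S_dc) (rule dcP[OF that])
  have Vt: "deriv (\<lambda>s. V s x m P) t = S N (Gt t P) pw pw x m" if "0 < t" "t < T" "0 < P" for t x m P
  proof -
    have "DERIV (\<lambda>s. V s x m P) t :> S N (Gt t P) pw pw x m"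
      by (rule has_field_derivative_transform_within_open[OF dSt[OF that], of "{0<..<T}"])
        (use that rep in auto)
    then show ?thesis by (rule DERIV_imp_deriv)
  qed
  have VP: "deriv (\<lambda>q. V t x m q) P = S N (Hp t P) pw pw x m" if "0 < t" "t < T" "0 < P" for t x m P
  proof -
    have "DERIV (\<lambda>q. V t x m q) P :> S N (Hp t P) pw pw x m"
      by (rule has_field_derivative_transform_within_open[OF dSP[OF that], of "{0<..}"])
        (use that rep in auto)
    then show ?thesis by (rule DERIV_imp_deriv)
  qed
  have Vx: "deriv (\<lambda>z. V t z m P) x = S N (C t P) dp pw x m" if "0 < t" "t < T" "0 < P" for t x m P
    using that by (simp add: rep deriv_Sx_pw)
  have Vxx: "deriv (\<lambda>y. deriv (\<lambda>z. V t z m P) y) x = S N (C t P) ddp pw x m" if "0 < t" "t < T" "0 < P" for t x m P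
    using that by (simp add: Vx deriv_Sx_dp)
  have Vm: "deriv (\<lambda>k. V t x k P) m = S N (C t P) pw dp x m" if "0 < t" "t < T" "0 < P" for t x m P
    using that by (simp add: rep deriv_Sm_pw)
  have Vmm: "deriv (\<lambda>n. deriv (\<lambda>k. V t x k P) n) m = S N (C t P) pw ddp x m" if "0 < t" "t < T" "0 < P" for t x m P
    using that by (simp add: Vm deriv_Sm_dp)
  have Vxm: "deriv (\<lambda>k. deriv (\<lambda>z. V t z k P) x) m = S N (C t P) dp dp x m" if "0 < t" "t < T" "0 < P" for t x m P
    using that by (simp add: Vx deriv_Sm_pw)
  have EQ: "0 < S N (C t P) ddp pw x m \<and>
     0 = S N (Gt t P) pw pw x m + P\<^sup>2 / 2 * S N (C t P) pw ddp x m - P\<^sup>2 * S N (Hp t P) pw pw x m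
       - (m * S N (C t P) dp pw x m + P * S N (C t P) dp dp x m)\<^sup>2 / (2 * S N (C t P) ddp pw x m)
       - \<tau> / 2 * ln (K / S N (C t P) ddp pw x m)" if "0 < t" "t < T" "0 < P" for t x m P
  proof -
    have "2 * pi * \<tau> / (\<sigma>\<^sup>2 * S N (C t P) ddp pw x m) = K / S N (C t P) ddp pw x m"
      by (simp add: K_def)
    then show ?thesis
      using eq0[THEN spec[of _ t], THEN spec[of _ x], THEN spec[of _ m], THEN spec[of _ P]] that by (simp add: Let_def Vt VP Vx Vxx Vmm Vxm deriv_Sx_dp deriv_Sm_pw deriv_Sm_dp deriv_Sx_pw)
  qed

  have cx: "S N (C t P) ddp pw x m = S N (C t P) ddp pw 0 m" if "0 < t" "t < T" "0 < P" for t x m P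
    by (rule line_const[where A="\<lambda>x. S N (C t P) ddp pw x m"
        and R="\<lambda>x. S N (Gt t P) pw pw x m + P\<^sup>2 / 2 * S N (C t P) pw ddp x m - P\<^sup>2 * S N (Hp t P) pw pw x m"
        and B="\<lambda>x. m * S N (C t P) dp pw x m + P * S N (C t P) dp dp x m" and \<tau>=\<tau> and K=K])
      (use EQ[OF that] assms K in \<open>auto intro!: ispoly_divc ispoly_add ispoly_diff ispoly_mult ispoly_const ispoly_Sx ispoly_pw ispoly_dp ispoly_ddp\<close>)
  have cm: "S N (C t P) ddp pw x m = S N (C t P) ddp pw x 0" if "0 < t" "t < T" "0 < P" for t x m P
    by (rule line_const[where A="\<lambda>m. S N (C t P) ddp pw x m"
        and R="\<lambda>m. S N (Gt t P) pw pw x m + P\<^sup>2 / 2 * S N (C t P) pw ddp x m - P\<^sup>2 * S N (Hp t P) pw pw x m"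
        and B="\<lambda>m. m * S N (C t P) dp pw x m + P * S N (C t P) dp dp x m" and \<tau>=\<tau> and K=K])
      (use EQ[OF that] assms K in \<open>auto intro!: ispoly_divc ispoly_add ispoly_diff ispoly_mult ispoly_const ispoly_id ispoly_Sm ispoly_pw ispoly_dp ispoly_ddp\<close>)
  define a where "a t P = S N (C t P) ddp pw 0 0" for t P
  have ca: "S N (C t P) ddp pw x m = a t P" if "0 < t" "t < T" "0 < P" for t x m P
    using cx[OF that, of x m] cm[OF that, of 0 m] by (simp add: a_def)
  have apos: "a t P > 0" if "0 < t" "t < T" "0 < P" for t P
    using EQ[OF that, of 0 0] by (simp add: a_def)
  have Q2: "S N (C t P) dp pw z k = S N (C t P) dp pw 0 k + a t P * z" if "0 < t" "t < T" "0 < P" for t P z k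
  proof -
    define f where "f z = S N (C t P) dp pw z k - a t P * z" for z
    have "\<forall>x. DERIV f x :> 0"
    proof
      fix x
      have "DERIV f x :> S N (C t P) ddp pw x k - a t P * 1"
        unfolding f_def by (auto intro!: derivative_eq_intros S_dx[OF d_dp])
      then show "DERIV f x :> 0" using ca[OF that] by simp
    qed
    then have "f z = f 0" by (rule DERIV_isconst_all)
    then show ?thesis by (simp add: f_def)
  qed
  have Q1: "S N (C t P) pw pw z k = S N (C t P) pw pw 0 k + S N (C t P) dp pw 0 k * z + a t P * z\<^sup>2 / 2"
    if "0 < t" "t < T" "0 < P" for t P z k
  proof -
    define f where "f z = S N (C t P) pw pw z k - S N (C t P) dp pw 0 k * z - a t P * z\<^sup>2 / 2" for z
    have "\<forall>x. DERIV f x :> 0"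
    proof
      fix x
      have "DERIV f x :> S N (C t P) dp pw x k - S N (C t P) dp pw 0 k * 1 - a t P * (2 * x ^ 1) / 2"
        unfolding f_def by (auto intro!: derivative_eq_intros S_dx[OF d_pw])
      then show "DERIV f x :> 0" using Q2[OF that, of x k] by simp
    qed
    then have "f z = f 0" by (rule DERIV_isconst_all)
    then show ?thesis by (simp add: f_def)
  qed
  have Dl: "S N (C t P) pw pw 1 k + S N (C t P) pw pw (-1) k - 2 * S N (C t P) pw pw 0 k = a t P"
    if "0 < t" "t < T" "0 < P" for t P k
    using Q1[OF that, of 1 k] Q1[OF that, of "-1" k] by simp
  have DG: "S N (Gt t P) pw pw 1 m + S N (Gt t P) pw pw (-1) m - 2 * S N (Gt t P) pw pw 0 m
          = S N (Gt t P) pw pw 1 0 + S N (Gt t P) pw pw (-1) 0 - 2 * S N (Gt t P) pw pw 0 0"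
    if "0 < t" "t < T" "0 < P" for t P m
  proof -
    have d1: "DERIV (\<lambda>s. S N (C s P) pw pw 1 k + S N (C s P) pw pw (-1) k - 2 * S N (C s P) pw pw 0 k) t
       :> S N (Gt t P) pw pw 1 k + S N (Gt t P) pw pw (-1) k - 2 * S N (Gt t P) pw pw 0 k" for k
      by (intro DERIV_diff DERIV_add DERIV_cmult dSt[OF that])
    have "DERIV (\<lambda>s. S N (C s P) pw pw 1 m + S N (C s P) pw pw (-1) m - 2 * S N (C s P) pw pw 0 m) t
       :> S N (Gt t P) pw pw 1 0 + S N (Gt t P) pw pw (-1) 0 - 2 * S N (Gt t P) pw pw 0 0"
      by (rule has_field_derivative_transform_within_open[OF d1[of 0], of "{0<..<T}"])
        (use that Dl in auto)
    from DERIV_unique[OF d1[of m] this] show ?thesis .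
  qed
  have DH: "S N (Hp t P) pw pw 1 m + S N (Hp t P) pw pw (-1) m - 2 * S N (Hp t P) pw pw 0 m
          = S N (Hp t P) pw pw 1 0 + S N (Hp t P) pw pw (-1) 0 - 2 * S N (Hp t P) pw pw 0 0"
    if "0 < t" "t < T" "0 < P" for t P m
  proof -
    have d1: "DERIV (\<lambda>q. S N (C t q) pw pw 1 k + S N (C t q) pw pw (-1) k - 2 * S N (C t q) pw pw 0 k) P
       :> S N (Hp t P) pw pw 1 k + S N (Hp t P) pw pw (-1) k - 2 * S N (Hp t P) pw pw 0 k" for k
      by (intro DERIV_diff DERIV_add DERIV_cmult dSP[OF that])
    have "DERIV (\<lambda>q. S N (C t q) pw pw 1 m + S N (C t q) pw pw (-1) m - 2 * S N (C t q) pw pw 0 m) P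
       :> S N (Hp t P) pw pw 1 0 + S N (Hp t P) pw pw (-1) 0 - 2 * S N (Hp t P) pw pw 0 0"
      by (rule has_field_derivative_transform_within_open[OF d1[of 0], of "{0<..}"])
        (use that Dl in auto)
    from DERIV_unique[OF d1[of m] this] show ?thesis .
  qed
  have Dmm: "S N (C t P) pw ddp 1 m + S N (C t P) pw ddp (-1) m - 2 * S N (C t P) pw ddp 0 m = 0"
    if "0 < t" "t < T" "0 < P" for t P m
  proof -
    have Dm: "S N (C t P) pw dp 1 k + S N (C t P) pw dp (-1) k - 2 * S N (C t P) pw dp 0 k = 0" for k
    proof -
      have d1: "DERIV (\<lambda>k. S N (C t P) pw pw 1 k + S N (C t P) pw pw (-1) k - 2 * S N (C t P) pw pw 0 k) k
        :> S N (C t P) pw dp 1 k + S N (C t P) pw dp (-1) k - 2 * S N (C t P) pw dp 0 k"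
        by (intro DERIV_diff DERIV_add DERIV_cmult S_dm d_pw)
      have "DERIV (\<lambda>k. S N (C t P) pw pw 1 k + S N (C t P) pw pw (-1) k - 2 * S N (C t P) pw pw 0 k) k :> 0"
        using Dl[OF that] by simp
      from DERIV_unique[OF d1 this] show ?thesis .
    qed
    have d1: "DERIV (\<lambda>k. S N (C t P) pw dp 1 k + S N (C t P) pw dp (-1) k - 2 * S N (C t P) pw dp 0 k) m
        :> S N (C t P) pw ddp 1 m + S N (C t P) pw ddp (-1) m - 2 * S N (C t P) pw ddp 0 m"
      by (intro DERIV_diff DERIV_add DERIV_cmult S_dm d_dp)
    have "DERIV (\<lambda>k. S N (C t P) pw dp 1 k + S N (C t P) pw dp (-1) k - 2 * S N (C t P) pw dp 0 k) m :> 0"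
      using Dm by simp
    from DERIV_unique[OF d1 this] show ?thesis .
  qed
  have Dxm: "S N (C t P) dp dp z m = S N (C t P) dp dp 0 m" if "0 < t" "t < T" "0 < P" for t P z m
  proof -
    have d1: "DERIV (\<lambda>k. S N (C t P) dp pw z k) m :> S N (C t P) dp dp z m"
      by (intro S_dm d_pw)
    have "DERIV (\<lambda>k. S N (C t P) dp pw 0 k + a t P * z) m :> S N (C t P) dp dp 0 m + 0"
      by (intro DERIV_add DERIV_const S_dm d_pw)
    then have "DERIV (\<lambda>k. S N (C t P) dp pw z k) m :> S N (C t P) dp dp 0 m"
      using Q2[OF that, of z] by simp
    from DERIV_unique[OF d1 this] show ?thesis .
  qed
  define t0 where "t0 = T / 2"
  have t0: "0 < t0" "t0 < T" "(0::real) < 1" using assms by (auto simp: t0_def)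
  have Ez: "0 = S N (Gt t0 1) pw pw z m + 1\<^sup>2 / 2 * S N (C t0 1) pw ddp z m - 1\<^sup>2 * S N (Hp t0 1) pw pw z m
       - (m * (S N (C t0 1) dp pw 0 m + a t0 1 * z) + 1 * S N (C t0 1) dp dp 0 m)\<^sup>2 / (2 * a t0 1)
       - \<tau> / 2 * ln (K / a t0 1)" for z m
    using EQ[OF t0, of z m] unfolding ca[OF t0] Q2[OF t0, of z m] Dxm[OF t0, of z m] by simp
  have key: "(S N (Gt t0 1) pw pw 1 m + S N (Gt t0 1) pw pw (-1) m - 2 * S N (Gt t0 1) pw pw 0 m)
      - 1\<^sup>2 * (S N (Hp t0 1) pw pw 1 m + S N (Hp t0 1) pw pw (-1) m - 2 * S N (Hp t0 1) pw pw 0 m)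
      = m\<^sup>2 * a t0 1" for m
    by (rule alg[OF apos[OF t0] Ez[of 1 m] Ez[of "-1" m] Ez[of 0 m] Dmm[OF t0]])
  have "0\<^sup>2 * a t0 1 = 1\<^sup>2 * a t0 1"
    using key[of 0] key[of 1] DG[OF t0, of 1] DH[OF t0, of 1] by simp
  then show False using apos[OF t0] by simp
qed

end
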